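(* Let $\alpha>1$, $k\ge 2$ an integer, $f\in\mathcal{M}_{\alpha,k}$, let $\phi:\mathbb{N}\to\mathbb{C}$ be an arithmetic function such that the Dirichlet series $\Phi(s)=\sum_{n=1}^\infty \phi(n)n^{-s}$ converges absolutely in the half-plane $\operatorname{Re}(s)>1$. Then for every $1<\sigma<\alpha$, $\Phi(s)f^*(s)\in L_1(\sigma-i\infty,\sigma+i\infty)$ and for all $x>0$ $$\frac{1}{2\pi i}\int_{\sigma-i\infty}^{\sigma+i\infty}\Phi(s)f^*(s)x^{-s}\,ds=\sum_{n=1}^\infty\phi(n)f(nx);$$ moreover the Mellin transform of $x\mapsto\sum_{n=1}^\infty\phi(n)f(nx)$ exists in the strip $1<\operatorname{Re}(s)<\alpha$ and equals $\Phi(s)f^*(s)$ there.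
   Context: For $\alpha>1$ and $k\in\mathbb{N}_0$, the class $\mathcal{M}_{\alpha,k}$ consists of the functions $f$ defined on $[0,\infty)$ such that $f\in\mathcal{C}^{(k)}([0,\infty))$ and $f^{(j)}(x)=\mathcal{O}(x^{-\alpha-j})$ as $x\to\infty$, for all $j=0,1,\dots,k$. $f^*(s)=\int_0^\infty f(x)x^{s-1}dx$ denotes the Mellin transform of $f$. *)

theory Defs
  imports "HOL-Analysis.Analysis"
begin

definition class_M :: "real \<Rightarrow> nat \<Rightarrow> (real \<Rightarrow> complex) \<Rightarrow> bool" where
  "class_M \<alpha> k f \<longleftrightarrow>
     (\<exists>D :: nat \<Rightarrow> real \<Rightarrow> complex.
        (\<forall>x\<ge>0. D 0 x = f x) \<and>
        (\<forall>j<k. \<forall>x\<ge>0. (D j has_vector_derivative D (Suc j) x) (at x within {0..})) \<and>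
        (\<forall>j\<le>k. continuous_on {0..} (D j)) \<and>
        (\<forall>j\<le>k. \<exists>C X. \<forall>x\<ge>X. norm (D j x) \<le> C * x powr (- \<alpha> - real j)))"

definition mellin :: "(real \<Rightarrow> complex) \<Rightarrow> complex \<Rightarrow> complex" where
  "mellin f s = (LINT x:{0<..}|lborel. of_real x powr (s - 1) * f x)"

definition mellin_exists :: "(real \<Rightarrow> complex) \<Rightarrow> complex \<Rightarrow> bool" where
  "mellin_exists f s \<longleftrightarrow> set_integrable lborel {0<..} (\<lambda>x. of_real x powr (s - 1) * f x)"

definition dirichlet_series :: "(nat \<Rightarrow> complex) \<Rightarrow> complex \<Rightarrow> complex" where
  "dirichlet_series \<phi> s = (\<Sum>n. \<phi> (Suc n) / of_nat (Suc n) powr s)"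

end

theory Submission
  imports Defs "HOL-Probability.Probability"
begin


lemma integrable_exp_abs:
  fixes c :: real assumes c: "c > 0"
  shows "integrable lborel (\<lambda>x. exp (- c * \<bar>x\<bar>))"
proof -
  have i1: "integrable lborel (\<lambda>x. indicator {0<..} x *\<^sub>R exp (-(x * c)))"
    using integrable_I0i_exp_mscale[OF c] unfolding set_integrable_def .
  have i2: "integrable lborel (\<lambda>x. indicator {0<..} (0 + (-1) * x) *\<^sub>R exp (-((0 + (-1) * x) * c)))"
    by (rule lborel_integrable_real_affine[OF i1]) simp
  have i3: "integrable lborel (\<lambda>x. indicator {0<..} x *\<^sub>R exp (-(x * c)) + indicator {0<..} (0 + (-1) * x) *\<^sub>R exp (-((0 + (-1) * x) * c)) + indicator {0} x)"
  proof (rule Bochner_Integration.integrable_add[OF Bochner_Integration.integrable_add[OF i1 i2]])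
    show "integrable lborel (indicat_real {0::real})"
      by (rule integrable_real_indicator) auto
  qed
  show ?thesis
    by (rule Bochner_Integration.integrable_cong[THEN iffD1, OF refl _ i3]) (auto simp: indicator_def mult.commute)
qed

lemma integrable_gauss: "integrable lborel (\<lambda>w::real. exp (- w\<^sup>2 / 2))"
proof -
  have "integrable lborel (\<lambda>w. sqrt (2*pi) * std_normal_density w)"
    using integrable_normal_density[of 0 1] by (intro Bochner_Integration.integrable_mult_right) auto
  then show ?thesis by (simp add: std_normal_density_def)
qed

lemma gauss_ft:
  "(\<integral>w. exp (- w\<^sup>2 / 2) *\<^sub>R iexp (s * w) \<partial>lborel) = complex_of_real (sqrt (2*pi) * exp (- s\<^sup>2 / 2))"
proof -
  have "char std_normal_distribution s = complex_of_real (exp (- s\<^sup>2 / 2))"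
    by (simp add: char_std_normal_distribution)
  moreover have "char std_normal_distribution s = (\<integral>w. std_normal_density w *\<^sub>R iexp (s * w) \<partial>lborel)"
    unfolding char_def by (subst integral_density) auto
  ultimately have "(\<integral>w. std_normal_density w *\<^sub>R iexp (s * w) \<partial>lborel) = complex_of_real (exp (- s\<^sup>2 / 2))"
    by simp
  then have "sqrt (2*pi) *\<^sub>R (\<integral>w. std_normal_density w *\<^sub>R iexp (s * w) \<partial>lborel) = sqrt (2*pi) *\<^sub>R complex_of_real (exp (- s\<^sup>2 / 2))"
    by simp
  then have "(\<integral>w. sqrt (2*pi) *\<^sub>R (std_normal_density w *\<^sub>R iexp (s * w)) \<partial>lborel) = complex_of_real (sqrt (2*pi) * exp (- s\<^sup>2 / 2))"
    by (simp add: scaleR_conv_of_real)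
  then show ?thesis
    by (simp add: std_normal_density_def scaleR_conv_of_real)
qed

lemma integral_Icc_limit:
  fixes Q :: "real \<Rightarrow> 'a::{banach, second_countable_topology}"
  assumes Q: "integrable lborel Q"
  shows "(\<lambda>n. \<integral>u. indicator {- real n..real n} u *\<^sub>R Q u \<partial>lborel) \<longlonglongrightarrow> (\<integral>u. Q u \<partial>lborel)"
proof (rule integral_dominated_convergence[where w="\<lambda>u. norm (Q u)"])
  have [measurable]: "Q \<in> borel_measurable borel" using Q by auto
  show "Q \<in> borel_measurable lborel" by simp
  show "(\<lambda>u. indicator {- real n..real n} u *\<^sub>R Q u) \<in> borel_measurable lborel" for n by measurable
  show "integrable lborel (\<lambda>u. norm (Q u))" using Q by simp
  show "AE u in lborel. (\<lambda>n. indicator {- real n..real n} u *\<^sub>R Q u) \<longlonglongrightarrow> Q u"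
  proof (rule AE_I2, rule tendsto_eventually)
    fix u :: real
    have "eventually (\<lambda>n. nat (ceiling \<bar>u\<bar>) \<le> n) sequentially" by (rule eventually_ge_at_top)
    then show "eventually (\<lambda>n. indicator {- real n..real n} u *\<^sub>R Q u = Q u) sequentially"
    proof (rule eventually_mono)
      fix n assume "nat (ceiling \<bar>u\<bar>) \<le> n"
      then have "\<bar>u\<bar> \<le> real n" by linarith
      then show "indicator {- real n..real n} u *\<^sub>R Q u = Q u" by (auto simp: indicator_def)
    qed
  qed
  show "AE u in lborel. norm (indicator {- real n..real n} u *\<^sub>R Q u) \<le> norm (Q u)" for n
    by (auto simp: indicator_def)
qed

definition FT :: "(real \<Rightarrow> complex) \<Rightarrow> real \<Rightarrow> complex" where
  "FT F t = (\<integral>u. F u * iexp (t * u) \<partial>lborel)"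

lemma integrable_mult_iexp:
  assumes "integrable lborel F"
  shows "integrable lborel (\<lambda>u. F u * iexp (t * u))"
proof (rule Bochner_Integration.integrable_bound[OF assms])
  have [measurable]: "F \<in> borel_measurable borel" using assms by auto
  show "(\<lambda>u. F u * iexp (t * u)) \<in> borel_measurable lborel" by measurable
  show "AE x in lborel. norm (F x * iexp (t * x)) \<le> norm (F x)"
    by (simp add: norm_mult)
qed

lemma iexp_deriv:
  "((\<lambda>u. iexp (t * u)) has_vector_derivative (\<i> * t * iexp (t * u))) (at u within X)"
proof -
  have "((\<lambda>z. exp (\<i> * of_real t * z)) has_field_derivative (\<i> * t * exp (\<i> * t * of_real u))) (at (of_real u))"
    by (auto intro!: derivative_eq_intros)
  from has_vector_derivative_real_field[OF this] show ?thesis by (simp add: mult_ac)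
qed

lemma ft_ibp:
  fixes F F' :: "real \<Rightarrow> complex"
  assumes der: "\<And>u. (F has_vector_derivative F' u) (at u)"
    and contF': "continuous_on UNIV F'"
    and intF: "integrable lborel F" and intF': "integrable lborel F'"
    and top: "(F \<longlongrightarrow> 0) at_top" and bot: "(F \<longlongrightarrow> 0) at_bot"
  shows "FT F' t = - (\<i> * t) * FT F t"
proof -
  define P where "P u = F u * iexp (t * u)" for u
  define Q where "Q u = F' u * iexp (t * u) + F u * (\<i> * t * iexp (t * u))" for u
  have dP: "(P has_vector_derivative Q u) (at u within X)" for u X
    unfolding P_def Q_def
    apply (rule has_vector_derivative_at_within)
    using has_vector_derivative_mult[OF der[of u] iexp_deriv[of t u UNIV]]
    by (simp add: mult_ac add.commute)
  have contF: "continuous_on UNIV F"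
    using der by (meson continuous_at_imp_continuous_on has_vector_derivative_continuous)
  have contQ: "continuous_on X Q" for X
    unfolding Q_def
    by (intro continuous_intros continuous_on_subset[OF contF'] continuous_on_subset[OF contF]) auto
  have i1: "integrable lborel (\<lambda>u. (\<i> * t) * (F u * iexp (t * u)))"
    using integrable_mult_iexp[OF intF, of t] by (rule Bochner_Integration.integrable_mult_right)
  have intQ: "integrable lborel Q"
    unfolding Q_def using Bochner_Integration.integrable_add[OF integrable_mult_iexp[OF intF', of t] i1]
    by (simp add: mult_ac)
  have eqn: "(\<integral>u. indicator {- real n..real n} u *\<^sub>R Q u \<partial>lborel) = P (real n) - P (- real n)" for n
  proof -
    have "(LBINT x= - real n..real n. Q x) = P (real n) - P (- real n)"
      by (rule interval_integral_FTC_finite) (auto intro: contQ dP)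
    then show ?thesis by (simp add: interval_integral_Icc set_lebesgue_integral_def)
  qed
  have "(\<lambda>n. P (real n) - P (- real n)) \<longlonglongrightarrow> 0 - 0"
  proof (intro tendsto_diff)
    have nP: "norm (P u) = norm (F u)" for u
      unfolding P_def by (simp add: norm_mult)
    have Ptop: "(P \<longlongrightarrow> 0) at_top"
      by (rule tendsto_norm_zero_cancel) (use tendsto_norm_zero[OF top] in \<open>simp add: nP\<close>)
    have Pbot: "(P \<longlongrightarrow> 0) at_bot"
      by (rule tendsto_norm_zero_cancel) (use tendsto_norm_zero[OF bot] in \<open>simp add: nP\<close>)
    show "(\<lambda>n. P (real n)) \<longlonglongrightarrow> 0"
      by (rule filterlim_compose[OF Ptop filterlim_real_sequentially])
    have "filterlim (\<lambda>n. - real n) at_bot sequentially"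
      using filterlim_real_sequentially by (simp add: filterlim_uminus_at_top)
    then show "(\<lambda>n. P (- real n)) \<longlonglongrightarrow> 0"
      by (rule filterlim_compose[OF Pbot])
  qed
  with integral_Icc_limit[OF intQ] have "(\<integral>u. Q u \<partial>lborel) = 0"
    unfolding eqn by (simp add: LIMSEQ_unique)
  moreover have "(\<integral>u. Q u \<partial>lborel) = (\<integral>u. F' u * iexp (t * u) \<partial>lborel) + (\<integral>u. (\<i> * t) * (F u * iexp (t * u)) \<partial>lborel)"
    using Bochner_Integration.integral_add[OF integrable_mult_iexp[OF intF', of t] i1]
    by (simp add: Q_def mult_ac)
  then have "(\<integral>u. Q u \<partial>lborel) = FT F' t + (\<i> * t) * FT F t"
    unfolding FT_def by (simp add: integral_mult_right_zero)
  ultimately show ?thesis by (simp add: algebra_simps eq_neg_iff_add_eq_0)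
qed

lemma integrable_gauss_scaled:
  assumes "(c::real) \<noteq> 0"
  shows "integrable lborel (\<lambda>t. exp (- (c * t)\<^sup>2 / 2))"
  using lborel_integrable_real_affine[OF integrable_gauss assms, of 0] by simp

lemma integral_gauss: "(\<integral>w. exp (- w\<^sup>2 / 2) \<partial>lborel) = sqrt (2 * pi)"
proof -
  have "(\<integral>w. std_normal_density w \<partial>lborel) = 1" by simp
  then have "(\<integral>w. (1 / sqrt (2 * pi)) * exp (- w\<^sup>2 / 2) \<partial>lborel) = 1"
    by (simp only: std_normal_density_def)
  then have "(1 / sqrt (2 * pi)) * (\<integral>w. exp (- w\<^sup>2 / 2) \<partial>lborel) = 1"
    by (simp only: integral_mult_right_zero)
  moreover have "sqrt (2 * pi) > 0" by simp
  ultimately show ?thesis by (metis divide_eq_1_iff mult_1 times_divide_eq_left)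
qed

lemma gauss_kernel:
  assumes e: "(e::real) > 0"
  shows "(\<integral>t. exp (- (e * t)\<^sup>2 / 2) *\<^sub>R iexp (t * v) \<partial>lborel)
        = complex_of_real ((1 / e) * sqrt (2 * pi) * exp (- (v / e)\<^sup>2 / 2))"
proof -
  have "(\<integral>t. exp (- (e * t)\<^sup>2 / 2) *\<^sub>R iexp (t * v) \<partial>lborel)
      = \<bar>1 / e\<bar> *\<^sub>R (\<integral>x. exp (- (e * (0 + 1 / e * x))\<^sup>2 / 2) *\<^sub>R iexp ((0 + 1 / e * x) * v) \<partial>lborel)"
    by (rule lborel_integral_real_affine) (use e in simp)
  also have "(\<lambda>x. exp (- (e * (0 + 1 / e * x))\<^sup>2 / 2) *\<^sub>R iexp ((0 + 1 / e * x) * v))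
      = (\<lambda>x. exp (- x\<^sup>2 / 2) *\<^sub>R iexp ((v / e) * x))"
    using e by (auto simp: field_simps)
  also have "(\<integral>x. exp (- x\<^sup>2 / 2) *\<^sub>R iexp ((v / e) * x) \<partial>lborel) = complex_of_real (sqrt (2*pi) * exp (- (v / e)\<^sup>2 / 2))"
    by (rule gauss_ft)
  finally show ?thesis using e by (simp add: scaleR_conv_of_real)
qed

lemma gauss_reg:
  fixes g :: "real \<Rightarrow> complex"
  assumes contg: "continuous_on UNIV g" and intg: "integrable lborel g" and e: "(e::real) > 0"
  shows "(\<integral>t. FT g t * iexp (- (t * u0)) * complex_of_real (exp (- (e * t)\<^sup>2 / 2)) \<partial>lborel)
       = sqrt (2 * pi) * (\<integral>w. exp (- w\<^sup>2 / 2) *\<^sub>R g (u0 + e * w) \<partial>lborel)"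
proof -
  have gm[measurable]: "g \<in> borel_measurable borel"
    using contg by (simp add: borel_measurable_continuous_onI)
  define E where "E t = exp (- (e * t)\<^sup>2 / 2)" for t
  define K where "K v = (\<integral>t. E t *\<^sub>R iexp (t * v) \<partial>lborel)" for v
  define f where "f u t = g u * (E t *\<^sub>R iexp (t * (u - u0)))" for u t
  have intE: "integrable lborel E" unfolding E_def using e by (intro integrable_gauss_scaled) simp
  have Em[measurable]: "E \<in> borel_measurable borel" unfolding E_def by measurable
  have E0: "E t \<ge> 0" for t unfolding E_def by simp
  have step1: "FT g t * iexp (- (t * u0)) * complex_of_real (exp (- (e * t)\<^sup>2 / 2)) = (\<integral>u. f u t \<partial>lborel)" for t
  proof -
    have "FT g t * iexp (- (t * u0)) * complex_of_real (exp (- (e * t)\<^sup>2 / 2))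
        = FT g t * (iexp (- (t * u0)) * complex_of_real (exp (- (e * t)\<^sup>2 / 2)))" by (simp only: mult.assoc)
    also have "\<dots> = (\<integral>u. g u * iexp (t * u) * (iexp (- (t * u0)) * complex_of_real (exp (- (e * t)\<^sup>2 / 2))) \<partial>lborel)"
      unfolding FT_def by (simp only: integral_mult_left_zero)
    also have "\<dots> = (\<integral>u. f u t \<partial>lborel)"
    proof (rule Bochner_Integration.integral_cong[OF refl])
      fix u
      have "iexp (t * u) * iexp (- (t * u0)) = iexp (t * (u - u0))"
        by (simp add: exp_add[symmetric] algebra_simps)
      then show "g u * iexp (t * u) * (iexp (- (t * u0)) * complex_of_real (exp (- (e * t)\<^sup>2 / 2))) = f u t"
        unfolding f_def E_def by (simp add: scaleR_conv_of_real mult_ac)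
    qed
    finally show ?thesis .
  qed
  have intf: "integrable (lborel \<Otimes>\<^sub>M lborel) (case_prod f)"
  proof (rule lborel_pair.Fubini_integrable)
    show "case_prod f \<in> borel_measurable (lborel \<Otimes>\<^sub>M lborel)"
      unfolding f_def by measurable
    have "(\<integral>t. norm (f u t) \<partial>lborel) = norm (g u) * (\<integral>t. E t \<partial>lborel)" for u
      unfolding f_def by (simp add: norm_mult E0)
    moreover have "integrable lborel (\<lambda>u. norm (g u) * (\<integral>t. E t \<partial>lborel))"
      using intg by (intro integrable_mult_left integrable_norm)
    ultimately show "integrable lborel (\<lambda>u. \<integral>t. norm (case_prod f (u, t)) \<partial>lborel)" by simp
    show "AE u in lborel. integrable lborel (\<lambda>t. case_prod f (u, t))"
    proof (rule AE_I2)
      fix u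
      show "integrable lborel (\<lambda>t. case_prod f (u, t))"
        unfolding f_def split
      proof (rule Bochner_Integration.integrable_mult_right, rule Bochner_Integration.integrable_bound[OF intE])
        show "(\<lambda>t. E t *\<^sub>R iexp (t * (u - u0))) \<in> borel_measurable lborel" by measurable
        show "AE t in lborel. norm (E t *\<^sub>R iexp (t * (u - u0))) \<le> norm (E t)"
          by (simp add: E0)
      qed
    qed
  qed
  have "(\<integral>t. FT g t * iexp (- (t * u0)) * complex_of_real (exp (- (e * t)\<^sup>2 / 2)) \<partial>lborel) = (\<integral>t. \<integral>u. f u t \<partial>lborel \<partial>lborel)"
    by (intro Bochner_Integration.integral_cong refl step1)
  also have "\<dots> = (\<integral>u. \<integral>t. f u t \<partial>lborel \<partial>lborel)"
    by (rule lborel_pair.Fubini_integral[OF intf])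
  also have "\<dots> = (\<integral>u. g u * K (u - u0) \<partial>lborel)"
    unfolding f_def K_def by (simp del: mult_scaleR_right add: integral_mult_right_zero)
  also have "\<dots> = (\<integral>u. g u * complex_of_real ((1 / e) * sqrt (2 * pi) * exp (- ((u - u0) / e)\<^sup>2 / 2)) \<partial>lborel)"
  proof (rule Bochner_Integration.integral_cong[OF refl])
    fix u
    show "g u * K (u - u0) = g u * complex_of_real ((1 / e) * sqrt (2 * pi) * exp (- ((u - u0) / e)\<^sup>2 / 2))"
      unfolding K_def E_def using gauss_kernel[OF e, of "u - u0"] by simp
  qed
  also have "\<dots> = \<bar>e\<bar> *\<^sub>R (\<integral>w. g (u0 + e * w) * complex_of_real ((1 / e) * sqrt (2 * pi) * exp (- ((u0 + e * w - u0) / e)\<^sup>2 / 2)) \<partial>lborel)"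
    by (rule lborel_integral_real_affine) (use e in simp)
  also have "(\<lambda>w. g (u0 + e * w) * complex_of_real ((1 / e) * sqrt (2 * pi) * exp (- ((u0 + e * w - u0) / e)\<^sup>2 / 2)))
      = (\<lambda>w. complex_of_real (1 / e) * (complex_of_real (sqrt (2 * pi)) * (exp (- w\<^sup>2 / 2) *\<^sub>R g (u0 + e * w))))"
    using e by (auto simp: scaleR_conv_of_real mult_ac)
  also have "\<bar>e\<bar> *\<^sub>R (\<integral>w. complex_of_real (1 / e) * (complex_of_real (sqrt (2 * pi)) * (exp (- w\<^sup>2 / 2) *\<^sub>R g (u0 + e * w))) \<partial>lborel)
      = sqrt (2 * pi) * (\<integral>w. exp (- w\<^sup>2 / 2) *\<^sub>R g (u0 + e * w) \<partial>lborel)"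
    using e by (simp add: integral_mult_right_zero scaleR_conv_of_real)
  finally show ?thesis .
qed

lemma fourier_inversion:
  fixes g :: "real \<Rightarrow> complex"
  assumes contg: "continuous_on UNIV g" and intg: "integrable lborel g"
    and bnd: "\<And>u. norm (g u) \<le> B"
    and intG: "integrable lborel (FT g)"
  shows "(\<integral>t. FT g t * iexp (- (t * u0)) \<partial>lborel) = 2 * pi * g u0"
proof -
  have gm[measurable]: "g \<in> borel_measurable borel"
    using contg by (simp add: borel_measurable_continuous_onI)
  have Gm[measurable]: "FT g \<in> borel_measurable borel" using intG by auto
  define e where "e n = inverse (real (Suc n))" for n
  have e0: "e n > 0" for n unfolding e_def by simp
  have elim: "e \<longlonglongrightarrow> 0" unfolding e_def by (rule LIMSEQ_inverse_real_of_nat)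
  have A: "(\<lambda>n. \<integral>t. FT g t * iexp (- (t * u0)) * exp (- (e n * t)\<^sup>2 / 2) \<partial>lborel)
      \<longlonglongrightarrow> (\<integral>t. FT g t * iexp (- (t * u0)) \<partial>lborel)"
  proof (rule integral_dominated_convergence[where w="\<lambda>t. norm (FT g t)"])
    show "(\<lambda>t. FT g t * iexp (- (t * u0))) \<in> borel_measurable lborel" by measurable
    show "(\<lambda>t. FT g t * iexp (- (t * u0)) * exp (- (e n * t)\<^sup>2 / 2)) \<in> borel_measurable lborel" for n
      by measurable
    show "integrable lborel (\<lambda>t. norm (FT g t))" using intG by simp
    show "AE t in lborel. (\<lambda>n. FT g t * iexp (- (t * u0)) * exp (- (e n * t)\<^sup>2 / 2)) \<longlonglongrightarrow> FT g t * iexp (- (t * u0))"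
    proof (rule AE_I2)
      fix t
      have "(\<lambda>n. exp (- (e n * t)\<^sup>2 / 2)) \<longlonglongrightarrow> exp (- (0 * t)\<^sup>2 / 2)"
        by (intro tendsto_intros elim) simp
      then have "(\<lambda>n. complex_of_real (exp (- (e n * t)\<^sup>2 / 2))) \<longlonglongrightarrow> 1"
        using tendsto_of_real by fastforce
      then show "(\<lambda>n. FT g t * iexp (- (t * u0)) * exp (- (e n * t)\<^sup>2 / 2)) \<longlonglongrightarrow> FT g t * iexp (- (t * u0))"
        using tendsto_mult[OF tendsto_const, of _ 1 sequentially "FT g t * iexp (- (t * u0))"] by simp
    qed
    show "AE t in lborel. norm (FT g t * iexp (- (t * u0)) * exp (- (e n * t)\<^sup>2 / 2)) \<le> norm (FT g t)" for n
    proof (rule AE_I2)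
      fix t
      have "exp (- (e n * t)\<^sup>2 / 2) \<le> 1" by simp
      then show "norm (FT g t * iexp (- (t * u0)) * exp (- (e n * t)\<^sup>2 / 2)) \<le> norm (FT g t)"
        by (simp add: norm_mult mult_left_le)
    qed
  qed
  have B: "(\<lambda>n. \<integral>w. exp (- w\<^sup>2 / 2) *\<^sub>R g (u0 + e n * w) \<partial>lborel) \<longlonglongrightarrow> (\<integral>w. exp (- w\<^sup>2 / 2) *\<^sub>R g u0 \<partial>lborel)"
  proof (rule integral_dominated_convergence[where w="\<lambda>w. B * exp (- w\<^sup>2 / 2)"])
    show "(\<lambda>w. exp (- w\<^sup>2 / 2) *\<^sub>R g u0) \<in> borel_measurable lborel" by measurable
    show "(\<lambda>w. exp (- w\<^sup>2 / 2) *\<^sub>R g (u0 + e n * w)) \<in> borel_measurable lborel" for n by measurable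
    show "integrable lborel (\<lambda>w. B * exp (- w\<^sup>2 / 2))"
      using integrable_gauss by (rule Bochner_Integration.integrable_mult_right)
    show "AE w in lborel. (\<lambda>n. exp (- w\<^sup>2 / 2) *\<^sub>R g (u0 + e n * w)) \<longlonglongrightarrow> exp (- w\<^sup>2 / 2) *\<^sub>R g u0"
    proof (rule AE_I2)
      fix w
      have "(\<lambda>n. u0 + e n * w) \<longlonglongrightarrow> u0 + 0 * w" by (intro tendsto_intros elim)
      then have "(\<lambda>n. g (u0 + e n * w)) \<longlonglongrightarrow> g u0"
        by (intro isCont_tendsto_compose[of _ g]) (use contg in \<open>auto simp: continuous_on_eq_continuous_at\<close>)
      then show "(\<lambda>n. exp (- w\<^sup>2 / 2) *\<^sub>R g (u0 + e n * w)) \<longlonglongrightarrow> exp (- w\<^sup>2 / 2) *\<^sub>R g u0"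
        by (intro tendsto_intros)
    qed
    show "AE w in lborel. norm (exp (- w\<^sup>2 / 2) *\<^sub>R g (u0 + e n * w)) \<le> B * exp (- w\<^sup>2 / 2)" for n
      by (rule AE_I2) (simp add: bnd mult.commute mult_right_mono)
  qed
  have C: "(\<integral>w. exp (- w\<^sup>2 / 2) *\<^sub>R g u0 \<partial>lborel) = sqrt (2 * pi) * g u0"
    using integral_gauss by (simp add: scaleR_conv_of_real integral_mult_left_zero)
  have "(\<lambda>n. \<integral>t. FT g t * iexp (- (t * u0)) * exp (- (e n * t)\<^sup>2 / 2) \<partial>lborel)
      = (\<lambda>n. sqrt (2 * pi) * (\<integral>w. exp (- w\<^sup>2 / 2) *\<^sub>R g (u0 + e n * w) \<partial>lborel))"
    by (rule ext, rule gauss_reg[OF contg intg], rule e0)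
  with A have "(\<lambda>n. sqrt (2 * pi) * (\<integral>w. exp (- w\<^sup>2 / 2) *\<^sub>R g (u0 + e n * w) \<partial>lborel))
      \<longlonglongrightarrow> (\<integral>t. FT g t * iexp (- (t * u0)) \<partial>lborel)" by simp
  moreover have "(\<lambda>n. sqrt (2 * pi) * (\<integral>w. exp (- w\<^sup>2 / 2) *\<^sub>R g (u0 + e n * w) \<partial>lborel))
      \<longlonglongrightarrow> sqrt (2 * pi) * (sqrt (2 * pi) * g u0)"
    using B unfolding C by (intro tendsto_intros)
  ultimately have "(\<integral>t. FT g t * iexp (- (t * u0)) \<partial>lborel) = sqrt (2 * pi) * (sqrt (2 * pi) * g u0)"
    by (rule LIMSEQ_unique)
  also have "\<dots> = 2 * pi * g u0"
    by (simp flip: of_real_mult add: mult.assoc[symmetric])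
  finally show ?thesis .
qed



lemma exp_bound_aux1:
  fixes c \<sigma> j X u :: real
  assumes "c > 0" "c \<le> \<sigma>" "X \<ge> 1" "j \<ge> 0" "exp u \<le> X"
  shows "exp ((\<sigma> + j) * u) \<le> X powr (\<sigma> + j + c) * exp (- c * \<bar>u\<bar>)"
proof (cases "u \<le> 0")
  case True
  have "exp ((\<sigma> + j) * u) \<le> exp (- c * \<bar>u\<bar>)"
    using True assms by (simp add: mult_right_mono_neg)
  also have "\<dots> \<le> X powr (\<sigma> + j + c) * exp (- c * \<bar>u\<bar>)"
  proof -
    have "1 \<le> X powr (\<sigma> + j + c)" using assms by (intro ge_one_powr_ge_zero) auto
    from mult_right_mono[OF this, of "exp (- c * \<bar>u\<bar>)"] show ?thesis by simp
  qed
  finally show ?thesis .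
next
  case False
  have "exp ((\<sigma> + j) * u) * exp (c * u) = exp u powr (\<sigma> + j + c)"
    by (simp add: powr_def exp_add[symmetric] algebra_simps)
  also have "\<dots> \<le> X powr (\<sigma> + j + c)"
    using assms by (intro powr_mono2) auto
  finally have le1: "exp ((\<sigma> + j) * u) * exp (c * u) \<le> X powr (\<sigma> + j + c)" .
  have e1: "exp (- c * \<bar>u\<bar>) * exp (c * u) = 1" using False by (simp add: exp_add[symmetric])
  have "exp ((\<sigma> + j) * u) = exp ((\<sigma> + j) * u) * exp (c * u) * exp (- c * \<bar>u\<bar>)"
    by (metis e1 mult.assoc mult.commute mult_1_right)
  also have "\<dots> \<le> X powr (\<sigma> + j + c) * exp (- c * \<bar>u\<bar>)"
    by (rule mult_right_mono[OF le1]) simp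
  finally show ?thesis .
qed

lemma exp_bound_aux2:
  fixes c \<sigma> j X u \<alpha> :: real
  assumes "c > 0" "c \<le> \<alpha> - \<sigma>" "X \<ge> 1" "exp u \<ge> X"
  shows "exp u powr (- \<alpha> - j) * exp ((\<sigma> + j) * u) \<le> exp (- c * \<bar>u\<bar>)"
proof -
  have u: "u \<ge> 0" using assms by (metis exp_le_cancel_iff exp_zero order_trans)
  have "exp u powr (- \<alpha> - j) * exp ((\<sigma> + j) * u) = exp ((\<sigma> - \<alpha>) * u)"
    by (simp add: powr_def exp_add[symmetric] algebra_simps)
  also have "\<dots> \<le> exp (- c * \<bar>u\<bar>)"
  proof -
    have "(\<sigma> - \<alpha>) * u \<le> (- c) * u" by (rule mult_right_mono) (use assms u in auto)
    then show ?thesis using u by simp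
  qed
  finally show ?thesis .
qed


lemma exp_abs_lim:
  fixes c K :: real assumes c: "c > 0"
  shows "((\<lambda>u. K * exp (- c * \<bar>u\<bar>)) \<longlongrightarrow> 0) at_infinity"
proof -
  have "filterlim (\<lambda>u::real. norm u) at_top at_infinity"
    by (rule filterlim_at_infinity_imp_norm_at_top) (simp add: filterlim_ident)
  then have "filterlim (\<lambda>u::real. (- c) * \<bar>u\<bar>) at_bot at_infinity"
    using c by (intro filterlim_tendsto_neg_mult_at_bot[OF tendsto_const]) auto
  then have "((\<lambda>u. exp (- c * \<bar>u\<bar>)) \<longlongrightarrow> 0) at_infinity"
    using exp_at_bot filterlim_compose by fastforce
  then show ?thesis using tendsto_mult_right_zero by blast
qed

locale mclass =
  fixes \<alpha> :: real and f :: "real \<Rightarrow> complex" and D :: "nat \<Rightarrow> real \<Rightarrow> complex"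
  assumes alpha: "\<alpha> > 1"
    and D0: "\<And>x. x \<ge> 0 \<Longrightarrow> D 0 x = f x"
    and Dder: "\<And>j x. j < 2 \<Longrightarrow> x \<ge> 0 \<Longrightarrow> (D j has_vector_derivative D (Suc j) x) (at x within {0..})"
    and Dcont: "\<And>j. j \<le> 2 \<Longrightarrow> continuous_on {0..} (D j)"
    and Dbnd: "\<And>j. j \<le> 2 \<Longrightarrow> \<exists>C X. \<forall>x\<ge>X. norm (D j x) \<le> C * x powr (- \<alpha> - real j)"
begin

definition h :: "real \<Rightarrow> nat \<Rightarrow> real \<Rightarrow> complex" where
  "h \<sigma> j u = D j (exp u) * complex_of_real (exp ((\<sigma> + real j) * u))"

lemma Dcont_at: "j \<le> 2 \<Longrightarrow> x > 0 \<Longrightarrow> isCont (D j) x"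
  using continuous_on_interior[OF Dcont, of j x] by simp

lemma h_cont: "j \<le> 2 \<Longrightarrow> continuous_on UNIV (h \<sigma> j)"
  unfolding h_def
  by (intro continuous_at_imp_continuous_on ballI continuous_intros
        continuous_at_compose[of _ exp "D j", unfolded o_def] Dcont_at) auto

lemma h_bound:
  assumes j: "j \<le> 2" and s: "0 < \<sigma>" "\<sigma> < \<alpha>"
  shows "\<exists>K. \<forall>u. norm (h \<sigma> j u) \<le> K * exp (- min \<sigma> (\<alpha> - \<sigma>) * \<bar>u\<bar>)"
proof -
  define c where "c = min \<sigma> (\<alpha> - \<sigma>)"
  have c: "c > 0" "c \<le> \<sigma>" "c \<le> \<alpha> - \<sigma>" using s by (auto simp: c_def)
  obtain C X where CX: "\<And>x. x \<ge> X \<Longrightarrow> norm (D j x) \<le> C * x powr (- \<alpha> - real j)"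
    using Dbnd[OF j] by blast
  define X' where "X' = max X 1"
  have X': "X' \<ge> 1" "X' \<ge> X" by (auto simp: X'_def)
  have "bounded (D j ` {0..X'})"
    by (intro compact_imp_bounded compact_continuous_image continuous_on_subset[OF Dcont[OF j]]) auto
  then obtain B where B: "B > 0" "\<And>x. x \<in> {0..X'} \<Longrightarrow> norm (D j x) \<le> B"
    by (auto simp: bounded_pos)
  have C0: "C \<ge> 0"
  proof -
    have "0 \<le> norm (D j X')" by simp
    also have "\<dots> \<le> C * X' powr (- \<alpha> - real j)" using CX X' by simp
    finally show ?thesis using X' by (simp add: zero_le_mult_iff)
  qed
  define K where "K = B * X' powr (\<sigma> + j + c) + C"
  have "norm (h \<sigma> j u) \<le> K * exp (- c * \<bar>u\<bar>)" for u
  proof (cases "exp u \<le> X'")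
    case True
    have "norm (h \<sigma> j u) = norm (D j (exp u)) * exp ((\<sigma> + real j) * u)"
      by (simp add: h_def norm_mult)
    also have "\<dots> \<le> B * (X' powr (\<sigma> + j + c) * exp (- c * \<bar>u\<bar>))"
      using B True exp_bound_aux1[OF c(1,2) X'(1) _ True, of j]
      by (intro mult_mono) (auto simp: less_imp_le)
    also have "\<dots> \<le> K * exp (- c * \<bar>u\<bar>)"
      unfolding K_def using C0 by (simp add: algebra_simps)
    finally show ?thesis .
  next
    case False
    have "norm (h \<sigma> j u) = norm (D j (exp u)) * exp ((\<sigma> + real j) * u)"
      by (simp add: h_def norm_mult)
    also have "\<dots> \<le> C * exp u powr (- \<alpha> - real j) * exp ((\<sigma> + real j) * u)"
      using CX[of "exp u"] False X' by (intro mult_right_mono) auto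
    also have "\<dots> \<le> C * exp (- c * \<bar>u\<bar>)"
      using exp_bound_aux2[OF c(1,3) X'(1), of u j] False C0
      by (simp add: mult.assoc mult_left_mono)
    also have "\<dots> \<le> K * exp (- c * \<bar>u\<bar>)"
      unfolding K_def using B by (simp add: mult_right_mono)
    finally show ?thesis .
  qed
  then show ?thesis unfolding c_def by blast
qed


lemma h_bound':
  assumes j: "j \<le> 2" and s: "0 < \<sigma>" "\<sigma> < \<alpha>"
  obtains K where "K \<ge> 0" "\<And>u. norm (h \<sigma> j u) \<le> K * exp (- min \<sigma> (\<alpha> - \<sigma>) * \<bar>u\<bar>)"
proof -
  obtain K where K: "\<And>u. norm (h \<sigma> j u) \<le> K * exp (- min \<sigma> (\<alpha> - \<sigma>) * \<bar>u\<bar>)"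
    using h_bound[OF assms] by blast
  have "0 \<le> K * exp (- min \<sigma> (\<alpha> - \<sigma>) * \<bar>0\<bar>)" using K[of 0] norm_ge_zero order_trans by blast
  then have "K \<ge> 0" by simp
  with K show ?thesis using that by blast
qed

lemma h_integrable:
  assumes j: "j \<le> 2" and s: "0 < \<sigma>" "\<sigma> < \<alpha>"
  shows "integrable lborel (h \<sigma> j)"
proof -
  obtain K where K: "K \<ge> 0" "\<And>u. norm (h \<sigma> j u) \<le> K * exp (- min \<sigma> (\<alpha> - \<sigma>) * \<bar>u\<bar>)"
    using h_bound'[OF assms] by blast
  have "integrable lborel (\<lambda>u. K * exp (- min \<sigma> (\<alpha> - \<sigma>) * \<bar>u\<bar>))"
    using s by (intro Bochner_Integration.integrable_mult_right integrable_exp_abs) auto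
  then show ?thesis
  proof (rule Bochner_Integration.integrable_bound)
    show "h \<sigma> j \<in> borel_measurable lborel"
      using h_cont[OF j] by (simp add: borel_measurable_continuous_onI)
    show "AE x in lborel. norm (h \<sigma> j x) \<le> norm (K * exp (- min \<sigma> (\<alpha> - \<sigma>) * \<bar>x\<bar>))"
      using K by (intro AE_I2) (simp add: abs_mult)
  qed
qed

lemma h_bounded:
  assumes j: "j \<le> 2" and s: "0 < \<sigma>" "\<sigma> < \<alpha>"
  obtains K where "\<And>u. norm (h \<sigma> j u) \<le> K"
proof -
  obtain K where K: "K \<ge> 0" "\<And>u. norm (h \<sigma> j u) \<le> K * exp (- min \<sigma> (\<alpha> - \<sigma>) * \<bar>u\<bar>)"
    using h_bound'[OF assms] by blast
  have "norm (h \<sigma> j u) \<le> K" for u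
  proof -
    have "exp (- min \<sigma> (\<alpha> - \<sigma>) * \<bar>u\<bar>) \<le> 1" using s by simp
    then have "K * exp (- min \<sigma> (\<alpha> - \<sigma>) * \<bar>u\<bar>) \<le> K" using K(1) by (simp add: mult_left_le)
    then show ?thesis using K(2)[of u] by linarith
  qed
  then show ?thesis using that by blast
qed

lemma h_lim:
  assumes j: "j \<le> 2" and s: "0 < \<sigma>" "\<sigma> < \<alpha>"
  shows "(h \<sigma> j \<longlongrightarrow> 0) at_top" "(h \<sigma> j \<longlongrightarrow> 0) at_bot"
proof -
  obtain K where K: "K \<ge> 0" "\<And>u. norm (h \<sigma> j u) \<le> K * exp (- min \<sigma> (\<alpha> - \<sigma>) * \<bar>u\<bar>)"
    using h_bound'[OF assms] by blast
  have "(h \<sigma> j \<longlongrightarrow> 0) at_infinity"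
  proof (rule Lim_null_comparison[OF _ exp_abs_lim[of "min \<sigma> (\<alpha> - \<sigma>)" K]])
    show "min \<sigma> (\<alpha> - \<sigma>) > 0" using s by auto
  qed (use K in auto)
  then show "(h \<sigma> j \<longlongrightarrow> 0) at_top" "(h \<sigma> j \<longlongrightarrow> 0) at_bot"
    by (auto intro: tendsto_mono at_top_le_at_infinity at_bot_le_at_infinity)
qed

lemma h_deriv:
  assumes j: "j < 2"
  shows "(h \<sigma> j has_vector_derivative (h \<sigma> (Suc j) u + complex_of_real (\<sigma> + real j) * h \<sigma> j u)) (at u)"
proof -
  have "(D j has_vector_derivative D (Suc j) (exp u)) (at (exp u) within {0..})"
    using Dder[OF j, of "exp u"] by simp
  moreover have "at (exp u) within {0..} = at (exp u)"
    by (rule at_within_interior) simp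
  ultimately have d1: "(D j has_vector_derivative D (Suc j) (exp u)) (at (exp u))"
    by simp
  have d0: "(exp has_vector_derivative exp u) (at u)"
    using DERIV_exp[of u] unfolding has_real_derivative_iff_has_vector_derivative .
  have d2: "((\<lambda>u. D j (exp u)) has_vector_derivative (exp u *\<^sub>R D (Suc j) (exp u))) (at u)"
    using vector_diff_chain_at[OF d0 d1] by (simp add: o_def)
  have d3: "((\<lambda>u. complex_of_real (exp ((\<sigma> + real j) * u))) has_vector_derivative
      complex_of_real (exp ((\<sigma> + real j) * u) * (\<sigma> + real j))) (at u)"
    by (intro has_vector_derivative_of_real) (auto intro!: derivative_eq_intros)
  have "(h \<sigma> j has_vector_derivative
      (D j (exp u) * complex_of_real (exp ((\<sigma> + real j) * u) * (\<sigma> + real j)) +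
       exp u *\<^sub>R D (Suc j) (exp u) * complex_of_real (exp ((\<sigma> + real j) * u)))) (at u)"
    unfolding h_def[abs_def] by (rule has_vector_derivative_mult[OF d2 d3])
  moreover have "D j (exp u) * complex_of_real (exp ((\<sigma> + real j) * u) * (\<sigma> + real j)) +
       exp u *\<^sub>R D (Suc j) (exp u) * complex_of_real (exp ((\<sigma> + real j) * u))
     = h \<sigma> (Suc j) u + complex_of_real (\<sigma> + real j) * h \<sigma> j u"
  proof -
    have e: "exp ((\<sigma> + real (Suc j)) * u) = exp u * exp ((\<sigma> + real j) * u)"
      by (subst exp_add[symmetric], rule arg_cong[where f=exp]) (simp add: algebra_simps)
    show ?thesis unfolding h_def e
      by (simp only: scaleR_conv_of_real of_real_mult mult_ac add_ac)
  qed
  ultimately show ?thesis by simp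
qed

lemma FT_rel:
  assumes j: "j < 2" and s: "0 < \<sigma>" "\<sigma> < \<alpha>"
  shows "FT (h \<sigma> (Suc j)) t = - (complex_of_real (\<sigma> + real j) + \<i> * t) * FT (h \<sigma> j) t"
proof -
  have j2: "j \<le> 2" "Suc j \<le> 2" using j by auto
  have i1: "integrable lborel (h \<sigma> (Suc j))" "integrable lborel (h \<sigma> j)"
    using h_integrable[OF j2(2) s] h_integrable[OF j2(1) s] by auto
  have A: "FT (\<lambda>u. h \<sigma> (Suc j) u + complex_of_real (\<sigma> + real j) * h \<sigma> j u) t = - (\<i> * t) * FT (h \<sigma> j) t"
  proof (rule ft_ibp)
    show "(h \<sigma> j has_vector_derivative h \<sigma> (Suc j) u + complex_of_real (\<sigma> + real j) * h \<sigma> j u) (at u)" for u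
      by (rule h_deriv[OF j])
    show "continuous_on UNIV (\<lambda>u. h \<sigma> (Suc j) u + complex_of_real (\<sigma> + real j) * h \<sigma> j u)"
      by (intro continuous_intros h_cont j2)
    show "integrable lborel (h \<sigma> j)" by (rule i1)
    show "integrable lborel (\<lambda>u. h \<sigma> (Suc j) u + complex_of_real (\<sigma> + real j) * h \<sigma> j u)"
      by (intro Bochner_Integration.integrable_add Bochner_Integration.integrable_mult_right i1)
    show "(h \<sigma> j \<longlongrightarrow> 0) at_top" "(h \<sigma> j \<longlongrightarrow> 0) at_bot" using h_lim[OF j2(1) s] by auto
  qed
  have i2: "integrable lborel (\<lambda>u. h \<sigma> (Suc j) u * iexp (t * u))"
    by (rule integrable_mult_iexp[OF i1(1)])
  have i3: "integrable lborel (\<lambda>u. complex_of_real (\<sigma> + real j) * (h \<sigma> j u * iexp (t * u)))"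
    by (rule Bochner_Integration.integrable_mult_right[OF integrable_mult_iexp[OF i1(2)]])
  have "FT (\<lambda>u. h \<sigma> (Suc j) u + complex_of_real (\<sigma> + real j) * h \<sigma> j u) t
      = (\<integral>u. h \<sigma> (Suc j) u * iexp (t * u) + complex_of_real (\<sigma> + real j) * (h \<sigma> j u * iexp (t * u)) \<partial>lborel)"
    unfolding FT_def by (simp only: distrib_right mult.assoc)
  also have "\<dots> = FT (h \<sigma> (Suc j)) t + complex_of_real (\<sigma> + real j) * FT (h \<sigma> j) t"
    unfolding FT_def Bochner_Integration.integral_add[OF i2 i3] integral_mult_right_zero ..
  finally have B: "FT (\<lambda>u. h \<sigma> (Suc j) u + complex_of_real (\<sigma> + real j) * h \<sigma> j u) t
      = FT (h \<sigma> (Suc j)) t + complex_of_real (\<sigma> + real j) * FT (h \<sigma> j) t" .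
  from A B have "FT (h \<sigma> (Suc j)) t = - (\<i> * t) * FT (h \<sigma> j) t - complex_of_real (\<sigma> + real j) * FT (h \<sigma> j) t"
    using A B eq_diff_eq by metis
  moreover have "- (complex_of_real (\<sigma> + real j) + \<i> * t) * FT (h \<sigma> j) t
      = - (\<i> * t) * FT (h \<sigma> j) t - complex_of_real (\<sigma> + real j) * FT (h \<sigma> j) t"
    by (simp only: minus_add_distrib distrib_right) (simp add: algebra_simps)
  ultimately show ?thesis by simp
qed

lemma FT_h0_bound:
  assumes s: "0 < \<sigma>" "\<sigma> < \<alpha>"
  obtains N where "\<And>t. norm (FT (h \<sigma> 0) t) \<le> N * inverse (1 + t\<^sup>2)"
proof -
  define N2 where "N2 = (\<integral>u. norm (h \<sigma> 2 u) \<partial>lborel)"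
  define m where "m = min 1 (\<sigma>\<^sup>2)"
  have m: "m > 0" using s by (simp add: m_def)
  have "norm (FT (h \<sigma> 0) t) \<le> (N2 / m) * inverse (1 + t\<^sup>2)" for t
  proof -
    have n2: "norm (FT (h \<sigma> 2) t) \<le> N2"
    proof -
      have "norm (FT (h \<sigma> 2) t) \<le> (\<integral>u. norm (h \<sigma> 2 u * iexp (t * u)) \<partial>lborel)"
        unfolding FT_def by (rule integral_norm_bound)
      also have "\<dots> = N2" unfolding N2_def by (simp add: norm_mult)
      finally show ?thesis .
    qed
    have r1: "FT (h \<sigma> 1) t = - (complex_of_real \<sigma> + \<i> * t) * FT (h \<sigma> 0) t"
      using FT_rel[of 0 \<sigma> t] s by simp
    have r2: "FT (h \<sigma> 2) t = - (complex_of_real (\<sigma> + 1) + \<i> * t) * FT (h \<sigma> 1) t"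
      using FT_rel[of 1 \<sigma> t] s by (simp add: numeral_2_eq_2)
    have c1: "complex_of_real \<sigma> + \<i> * t = Complex \<sigma> t" by (simp add: complex_eq_iff)
    have c2: "complex_of_real (\<sigma> + 1) + \<i> * t = Complex (\<sigma> + 1) t" by (simp add: complex_eq_iff)
    have nc1: "norm (Complex \<sigma> t) = sqrt (\<sigma>\<^sup>2 + t\<^sup>2)" by (simp add: complex_norm)
    have nc2: "norm (Complex (\<sigma> + 1) t) \<ge> sqrt (\<sigma>\<^sup>2 + t\<^sup>2)"
    proof -
      have "\<sigma> * \<sigma> \<le> (\<sigma> + 1) * (\<sigma> + 1)" using s by (intro mult_mono) auto
      then show ?thesis by (simp add: complex_norm power2_eq_square)
    qed
    have eq: "norm (FT (h \<sigma> 2) t) = norm (Complex (\<sigma> + 1) t) * (norm (Complex \<sigma> t) * norm (FT (h \<sigma> 0) t))"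
      unfolding r2 r1 c1 c2 by (simp add: norm_mult)
    have "sqrt (\<sigma>\<^sup>2 + t\<^sup>2) * (sqrt (\<sigma>\<^sup>2 + t\<^sup>2) * norm (FT (h \<sigma> 0) t)) \<le> norm (FT (h \<sigma> 2) t)"
      unfolding eq nc1[symmetric] by (intro mult_right_mono nc2[unfolded nc1[symmetric]]) auto
    also have "\<dots> \<le> N2" by (rule n2)
    finally have "(\<sigma>\<^sup>2 + t\<^sup>2) * norm (FT (h \<sigma> 0) t) \<le> N2"
      by (simp add: mult.assoc[symmetric])
    moreover have "m * (1 + t\<^sup>2) \<le> \<sigma>\<^sup>2 + t\<^sup>2"
    proof -
      have "m \<le> 1" "m \<le> \<sigma>\<^sup>2" by (auto simp: m_def)
      moreover have "m * t\<^sup>2 \<le> t\<^sup>2" using \<open>m \<le> 1\<close> mult_right_mono[of m 1 "t\<^sup>2"] by simp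
      ultimately show ?thesis by (simp add: algebra_simps)
    qed
    ultimately have "m * (1 + t\<^sup>2) * norm (FT (h \<sigma> 0) t) \<le> N2"
      by (meson mult_right_mono norm_ge_zero order_trans)
    then show ?thesis using m by (simp add: field_simps add_pos_nonneg)
  qed
  then show ?thesis using that by blast
qed

lemma FT_h0_integrable:
  assumes s: "0 < \<sigma>" "\<sigma> < \<alpha>"
  shows "integrable lborel (FT (h \<sigma> 0))"
proof -
  obtain N where N: "\<And>t. norm (FT (h \<sigma> 0) t) \<le> N * inverse (1 + t\<^sup>2)"
    using FT_h0_bound[OF s] by blast
  have hm[measurable]: "h \<sigma> 0 \<in> borel_measurable borel"
    using h_cont[of 0 \<sigma>] by (simp add: borel_measurable_continuous_onI)
  have "integrable lborel (\<lambda>t. inverse (1 + t\<^sup>2) :: real)"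
    using integrable_inverse_1_plus_square by (simp add: set_integrable_def)
  then have "integrable lborel (\<lambda>t. N * inverse (1 + t\<^sup>2))"
    by (rule Bochner_Integration.integrable_mult_right)
  then show ?thesis
  proof (rule Bochner_Integration.integrable_bound)
    show "FT (h \<sigma> 0) \<in> borel_measurable lborel"
      unfolding FT_def[abs_def] by measurable
    show "AE t in lborel. norm (FT (h \<sigma> 0) t) \<le> norm (N * inverse (1 + t\<^sup>2))"
    proof (rule AE_I2)
      fix t
      have "norm (FT (h \<sigma> 0) t) \<le> N * inverse (1 + t\<^sup>2)" by (rule N)
      also have "\<dots> \<le> norm (N * inverse (1 + t\<^sup>2))" by simp
      finally show "norm (FT (h \<sigma> 0) t) \<le> norm (N * inverse (1 + t\<^sup>2))" .
    qed
  qed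
qed

lemma f_cont_at: "x > 0 \<Longrightarrow> isCont f x"
proof -
  assume x: "x > 0"
  have "eventually (\<lambda>y. y \<in> {0<..}) (nhds x)"
    using x by (intro eventually_nhds_in_open) auto
  then have "eventually (\<lambda>y. f y = D 0 y) (nhds x)"
    by eventually_elim (simp add: D0)
  then show ?thesis using isCont_cong Dcont_at[of 0 x] x by auto
qed

lemma F_cont_at: "x > 0 \<Longrightarrow> isCont (\<lambda>x. complex_of_real x powr w * f x) x"
  by (intro continuous_intros f_cont_at) (auto simp: complex_nonpos_Reals_iff)

lemma F_cont_on: "continuous_on {0<..} (\<lambda>x. complex_of_real x powr w * f x)"
  by (intro continuous_at_imp_continuous_on ballI F_cont_at) auto

lemma mellin_FT:
  assumes s: "0 < Re z" "Re z < \<alpha>"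
  shows "mellin_exists f z" and "mellin f z = FT (h (Re z) 0) (Im z)"
proof -
  define F where "F x = complex_of_real x powr (z - 1) * f x" for x
  define \<sigma> where "\<sigma> = Re z"
  define t where "t = Im z"
  have s': "0 < \<sigma>" "\<sigma> < \<alpha>" using s by (auto simp: \<sigma>_def)
  have z: "z = complex_of_real \<sigma> + \<i> * complex_of_real t"
    by (simp add: \<sigma>_def t_def complex_eq_iff)
  have key: "exp u *\<^sub>R F (exp u) = h \<sigma> 0 u * iexp (t * u)" for u
  proof -
    have "complex_of_real (exp u) powr (z - 1) = exp ((z - 1) * complex_of_real u)"
      by (simp add: powr_def Ln_of_real)
    then have "exp u *\<^sub>R F (exp u) = exp (complex_of_real u) * exp ((z - 1) * complex_of_real u) * f (exp u)"
      unfolding F_def by (simp add: scaleR_conv_of_real exp_of_real)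
    also have "\<dots> = exp (z * complex_of_real u) * f (exp u)"
      by (simp add: exp_add[symmetric] algebra_simps)
    also have "exp (z * complex_of_real u) = complex_of_real (exp (\<sigma> * u)) * iexp (t * u)"
      unfolding z by (simp add: exp_add[symmetric] exp_of_real[symmetric] algebra_simps)
    finally show ?thesis by (simp add: h_def D0 mult_ac)
  qed
  have hint: "integrable lborel (h \<sigma> 0)" using h_integrable[OF _ s'] by simp
  have Fcont: "continuous_on {0<..} F" unfolding F_def by (rule F_cont_on)
  have Fmeas: "(\<lambda>x. indicator {0<..} x *\<^sub>R F x) \<in> borel_measurable lborel"
    using borel_measurable_continuous_on_indicator[OF _ Fcont] by simp
  have lims: "((ereal \<circ> exp \<circ> real_of_ereal) \<longlongrightarrow> ereal 0) (at_right (-\<infinity>))"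
             "((ereal \<circ> exp \<circ> real_of_ereal) \<longlongrightarrow> \<infinity>) (at_left \<infinity>)"
  proof -
    show "((ereal \<circ> exp \<circ> real_of_ereal) \<longlongrightarrow> ereal 0) (at_right (-\<infinity>))"
      by (auto simp: ereal_tendsto_simps exp_at_bot o_assoc[symmetric])
    have "LIM x at_left \<infinity>. exp (real_of_ereal x) :> at_top"
      unfolding at_left_PInf filterlim_filtermap by (simp add: exp_at_top)
    then show "((ereal \<circ> exp \<circ> real_of_ereal) \<longlongrightarrow> \<infinity>) (at_left \<infinity>)"
      by (simp add: ereal_tendsto_simps2(2)[unfolded o_def] o_def)
  qed
  have normint: "set_integrable lborel (einterval 0 \<infinity>) (\<lambda>x. norm (F x))"
  proof (rule interval_integral_substitution_nonneg(1)[where g=exp and g'=exp and a="-\<infinity>" and b="\<infinity>"])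
    show "isCont (\<lambda>x. norm (F x)) (exp x)" for x
      unfolding F_def by (intro continuous_intros F_cont_at) auto
    show "set_integrable lborel (einterval (- \<infinity>) \<infinity>) (\<lambda>x. norm (F (exp x)) * exp x)"
    proof -
      have "(\<lambda>x. norm (F (exp x)) * exp x) = (\<lambda>x. norm (h \<sigma> 0 x))"
      proof
        fix x
        have "norm (exp x *\<^sub>R F (exp x)) = norm (h \<sigma> 0 x * iexp (t * x))" by (simp only: key)
        then show "norm (F (exp x)) * exp x = norm (h \<sigma> 0 x)" by (simp add: norm_mult mult.commute)
      qed
      then show ?thesis using hint by (simp add: set_integrable_def)
    qed
  qed (use lims in \<open>auto intro!: derivative_eq_intros simp: zero_ereal_def\<close>)
  have Fint: "set_integrable lborel {0<..} F"
    unfolding set_integrable_def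
  proof (rule Bochner_Integration.integrable_bound[OF normint[unfolded set_integrable_def]])
    show "(\<lambda>x. indicat_real {0<..} x *\<^sub>R F x) \<in> borel_measurable lborel" by (rule Fmeas)
    show "AE x in lborel. norm (indicat_real {0<..} x *\<^sub>R F x) \<le> norm (indicat_real (einterval 0 \<infinity>) x *\<^sub>R norm (F x))"
      by (intro AE_I2) (auto simp: indicator_def zero_ereal_def)
  qed
  then show "mellin_exists f z" unfolding mellin_exists_def F_def .
  have "(LBINT x=ereal 0..\<infinity>. F x) = (LBINT x=-\<infinity>..\<infinity>. exp x *\<^sub>R F (exp x))"
  proof (rule interval_integral_substitution_integrable[where g=exp and g'=exp])
    show "isCont F (exp x)" for x unfolding F_def by (intro F_cont_at) auto
    show "set_integrable lborel (einterval (- \<infinity>) \<infinity>) (\<lambda>x. exp x *\<^sub>R F (exp x))"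
      unfolding key using integrable_mult_iexp[OF hint] by (simp add: set_integrable_def)
    show "set_integrable lborel (einterval (ereal 0) \<infinity>) F" using Fint by simp
  qed (use lims in \<open>auto intro!: derivative_eq_intros\<close>)
  moreover have "(LBINT x=ereal 0..\<infinity>. F x) = mellin f z"
    by (simp add: interval_lebesgue_integral_def mellin_def F_def)
  moreover have "(LBINT x=-\<infinity>..\<infinity>. exp x *\<^sub>R F (exp x)) = FT (h \<sigma> 0) t"
    by (simp add: interval_lebesgue_integral_def FT_def set_lebesgue_integral_def key)
  ultimately show "mellin f z = FT (h (Re z) 0) (Im z)" by (simp add: \<sigma>_def t_def)
qed

lemma cpowr_pos: "y > 0 \<Longrightarrow> complex_of_real y powr w = exp (w * complex_of_real (ln y))"
  by (simp add: powr_def Ln_of_real)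

lemma mellin_line_eq:
  assumes s: "0 < \<sigma>" "\<sigma> < \<alpha>"
  shows "mellin f (Complex \<sigma> t) = FT (h \<sigma> 0) t"
  using mellin_FT(2)[of "Complex \<sigma> t"] s by simp

lemma mellin_line_bound:
  assumes s: "0 < \<sigma>" "\<sigma> < \<alpha>"
  obtains N where "\<And>t. norm (mellin f (Complex \<sigma> t)) \<le> N * inverse (1 + t\<^sup>2)"
  using FT_h0_bound[OF s] mellin_line_eq[OF s] by metis

lemma mellin_line_integrable:
  assumes s: "0 < \<sigma>" "\<sigma> < \<alpha>"
  shows "integrable lborel (\<lambda>t. mellin f (Complex \<sigma> t))"
  using FT_h0_integrable[OF s] mellin_line_eq[OF s] by simp

lemma mellin_line_measurable:
  assumes s: "0 < \<sigma>" "\<sigma> < \<alpha>"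
  shows "(\<lambda>t. mellin f (Complex \<sigma> t)) \<in> borel_measurable borel"
  using mellin_line_integrable[OF s] by auto

lemma mellin_inversion:
  assumes s: "0 < \<sigma>" "\<sigma> < \<alpha>" and y: "y > 0"
  shows "(\<integral>t. mellin f (Complex \<sigma> t) * complex_of_real y powr (- Complex \<sigma> t) \<partial>lborel) = 2 * pi * f y"
proof -
  obtain B where B: "\<And>u. norm (h \<sigma> 0 u) \<le> B" using h_bounded[of 0 \<sigma>] s by auto
  have FI: "(\<integral>t. FT (h \<sigma> 0) t * iexp (- (t * ln y)) \<partial>lborel) = 2 * pi * h \<sigma> 0 (ln y)"
    by (rule fourier_inversion[OF h_cont h_integrable B FT_h0_integrable]) (use s in auto)
  have pw: "complex_of_real y powr (- Complex \<sigma> t) = complex_of_real (y powr (- \<sigma>)) * iexp (- (t * ln y))" for t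
  proof -
    have "Complex \<sigma> t = complex_of_real \<sigma> + \<i> * complex_of_real t" by (simp add: complex_eq_iff)
    moreover have "Ln (complex_of_real y) = complex_of_real (ln y)" using Ln_of_real[OF y] by simp
    ultimately show ?thesis
      using y by (simp add: cpowr_pos powr_def exp_of_real[symmetric] exp_add[symmetric] algebra_simps)
  qed
  have "(\<integral>t. mellin f (Complex \<sigma> t) * complex_of_real y powr (- Complex \<sigma> t) \<partial>lborel)
      = (\<integral>t. complex_of_real (y powr (- \<sigma>)) * (FT (h \<sigma> 0) t * iexp (- (t * ln y))) \<partial>lborel)"
    by (intro Bochner_Integration.integral_cong refl) (simp add: mellin_line_eq[OF s] pw mult_ac)
  also have "\<dots> = complex_of_real (y powr (- \<sigma>)) * (2 * pi * h \<sigma> 0 (ln y))"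
    by (simp only: integral_mult_right_zero FI)
  also have "h \<sigma> 0 (ln y) = f y * complex_of_real (y powr \<sigma>)"
    using y by (simp add: h_def D0 powr_def)
  also have "complex_of_real (y powr (- \<sigma>)) * (2 * pi * (f y * complex_of_real (y powr \<sigma>))) = 2 * pi * f y"
  proof -
    have "y powr (- \<sigma>) * y powr \<sigma> = 1" using y by (simp add: powr_add[symmetric])
    then have "complex_of_real (y powr (- \<sigma>)) * complex_of_real (y powr \<sigma>) = 1"
      by (simp flip: of_real_mult)
    then show ?thesis by (simp add: algebra_simps)
  qed
  finally show ?thesis .
qed

end



lemma cpowr_mult_pos:
  assumes "m > 0" "x > 0"
  shows "complex_of_real (m * x) powr w = complex_of_real m powr w * complex_of_real x powr w"
  using powr_times_real[of "complex_of_real m" "complex_of_real x" w] assms by simp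

lemma norm_cpowr_pos:
  assumes "m > 0"
  shows "norm (complex_of_real m powr w) = m powr Re w"
  using norm_powr_real_powr[of "complex_of_real m" w] assms by simp

lemma of_nat_Suc_cpx: "(of_nat (Suc n) :: complex) = complex_of_real (real (Suc n))"
  by simp

lemma norm_dterm:
  "norm (c / (of_nat (Suc n) :: complex) powr s) = norm c / real (Suc n) powr Re s"
proof -
  have "norm ((of_nat (Suc n) :: complex) powr s) = real (Suc n) powr Re s"
    using norm_cpowr_pos[of "real (Suc n)" s] by simp
  then show ?thesis by (simp add: norm_divide)
qed

lemma complex_line: "(\<lambda>t. Complex \<sigma> t) = (\<lambda>t. complex_of_real \<sigma> + \<i> * complex_of_real t)"
  by (simp add: complex_eq_iff fun_eq_iff)

lemma cpowr_line_meas: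
  assumes "y > 0"
  shows "(\<lambda>t. complex_of_real y powr (w * Complex \<sigma> t)) \<in> borel_measurable borel"
proof -
  have "(\<lambda>t. complex_of_real y powr (w * Complex \<sigma> t))
      = (\<lambda>t. exp (w * (complex_of_real \<sigma> + \<i> * complex_of_real t) * Ln (complex_of_real y)))"
    using assms by (simp add: powr_def complex_line)
  also have "\<dots> \<in> borel_measurable borel" by measurable
  finally show ?thesis .
qed

lemma dirichlet_meas:
  assumes summ: "\<And>t. summable (\<lambda>n. \<phi> (Suc n) / of_nat (Suc n) powr Complex \<sigma> t)"
  shows "(\<lambda>t. dirichlet_series \<phi> (Complex \<sigma> t)) \<in> borel_measurable borel"
proof (rule borel_measurable_LIMSEQ_metric)
  show "(\<lambda>t. \<Sum>i<n. \<phi> (Suc i) / of_nat (Suc i) powr Complex \<sigma> t) \<in> borel_measurable borel" for n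
  proof -
    have "(\<lambda>t. \<phi> (Suc i) / of_nat (Suc i) powr Complex \<sigma> t) \<in> borel_measurable borel" for i
    proof -
      have "(\<lambda>t. complex_of_real (real (Suc i)) powr (1 * Complex \<sigma> t)) \<in> borel_measurable borel"
        by (rule cpowr_line_meas) simp
      then show ?thesis unfolding of_nat_Suc_cpx by (simp del: of_nat_Suc)
    qed
    then show ?thesis by measurable
  qed
  show "(\<lambda>n. \<Sum>i<n. \<phi> (Suc i) / of_nat (Suc i) powr Complex \<sigma> t) \<longlonglongrightarrow> dirichlet_series \<phi> (Complex \<sigma> t)" for t
    unfolding dirichlet_series_def using summ[of t] by (rule summable_LIMSEQ)
qed

theorem theorem2:
  fixes \<alpha> :: real and k :: nat and f :: "real \<Rightarrow> complex" and \<phi> :: "nat \<Rightarrow> complex"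
  assumes "\<alpha> > 1" and "k \<ge> 2" and "class_M \<alpha> k f"
    and "\<forall>s. Re s > 1 \<longrightarrow> summable (\<lambda>n. norm (\<phi> (Suc n) / of_nat (Suc n) powr s))"
  shows "(\<forall>\<sigma>. 1 < \<sigma> \<and> \<sigma> < \<alpha> \<longrightarrow>
            integrable lborel (\<lambda>t. dirichlet_series \<phi> (Complex \<sigma> t) * mellin f (Complex \<sigma> t)) \<and>
            (\<forall>x>0. (\<lambda>n. \<phi> (Suc n) * f (real (Suc n) * x)) sums
               (1 / (2 * of_real pi * \<i>) *
                 (LINT t|lborel. dirichlet_series \<phi> (Complex \<sigma> t) * mellin f (Complex \<sigma> t)
                                  * of_real x powr (- Complex \<sigma> t) * \<i>))))
       \<and> (\<forall>s. 1 < Re s \<and> Re s < \<alpha> \<longrightarrow>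
            mellin_exists (\<lambda>x. \<Sum>n. \<phi> (Suc n) * f (real (Suc n) * x)) s \<and>
            mellin (\<lambda>x. \<Sum>n. \<phi> (Suc n) * f (real (Suc n) * x)) s
              = dirichlet_series \<phi> s * mellin f s)"
proof -
  obtain D :: "nat \<Rightarrow> real \<Rightarrow> complex" where
    D0: "\<forall>x\<ge>0. D 0 x = f x" and
    Dd: "\<forall>j<k. \<forall>x\<ge>0. (D j has_vector_derivative D (Suc j) x) (at x within {0..})" and
    Dc: "\<forall>j\<le>k. continuous_on {0..} (D j)" and
    Db: "\<forall>j\<le>k. \<exists>C X. \<forall>x\<ge>X. norm (D j x) \<le> C * x powr (- \<alpha> - real j)"
    using assms(3) unfolding class_M_def by blast
  interpret M: mclass \<alpha> f D
  proof
    show "\<alpha> > 1" by (rule assms(1))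
    show "\<And>x. x \<ge> 0 \<Longrightarrow> D 0 x = f x" using D0 by blast
    show "\<And>j x. j < 2 \<Longrightarrow> x \<ge> 0 \<Longrightarrow> (D j has_vector_derivative D (Suc j) x) (at x within {0..})"
      using Dd assms(2) by simp
    show "\<And>j. j \<le> 2 \<Longrightarrow> continuous_on {0..} (D j)" using Dc assms(2) by simp
    show "\<And>j. j \<le> 2 \<Longrightarrow> \<exists>C X. \<forall>x\<ge>X. norm (D j x) \<le> C * x powr (- \<alpha> - real j)"
      using Db assms(2) by simp
  qed
  have summ: "summable (\<lambda>n. norm (\<phi> (Suc n)) / real (Suc n) powr Re s)" if "Re s > 1" for s
    using assms(4)[rule_format, OF that] unfolding norm_dterm .
  have summ': "summable (\<lambda>n. \<phi> (Suc n) / of_nat (Suc n) powr s)" if "Re s > 1" for s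
    using assms(4)[rule_format, OF that] by (rule summable_norm_cancel)
  have Phi_bound: "norm (dirichlet_series \<phi> s) \<le> (\<Sum>n. norm (\<phi> (Suc n)) / real (Suc n) powr Re s)"
    if "Re s > 1" for s
  proof -
    have "norm (dirichlet_series \<phi> s) \<le> (\<Sum>n. norm (\<phi> (Suc n) / of_nat (Suc n) powr s))"
      unfolding dirichlet_series_def using assms(4)[rule_format, OF that] by (rule summable_norm)
    then show ?thesis unfolding norm_dterm .
  qed
  have part1: "integrable lborel (\<lambda>t. dirichlet_series \<phi> (Complex \<sigma> t) * mellin f (Complex \<sigma> t)) \<and>
            (\<forall>x>0. (\<lambda>n. \<phi> (Suc n) * f (real (Suc n) * x)) sums
               (1 / (2 * of_real pi * \<i>) *
                 (LINT t|lborel. dirichlet_series \<phi> (Complex \<sigma> t) * mellin f (Complex \<sigma> t)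
                                  * of_real x powr (- Complex \<sigma> t) * \<i>)))"
    if \<sigma>: "1 < \<sigma>" "\<sigma> < \<alpha>" for \<sigma>
  proof -
    have s0: "0 < \<sigma>" "\<sigma> < \<alpha>" using \<sigma> by auto
    define S where "S = (\<Sum>n. norm (\<phi> (Suc n)) / real (Suc n) powr \<sigma>)"
    have PB: "norm (dirichlet_series \<phi> (Complex \<sigma> t)) \<le> S" for t
      using Phi_bound[of "Complex \<sigma> t"] \<sigma> by (simp add: S_def)
    have Pm[measurable]: "(\<lambda>t. dirichlet_series \<phi> (Complex \<sigma> t)) \<in> borel_measurable borel"
      by (rule dirichlet_meas) (use summ' \<sigma> in simp)
    have Mm[measurable]: "(\<lambda>t. mellin f (Complex \<sigma> t)) \<in> borel_measurable borel"
      by (rule M.mellin_line_measurable[OF s0])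
    have Mi: "integrable lborel (\<lambda>t. mellin f (Complex \<sigma> t))"
      by (rule M.mellin_line_integrable[OF s0])
    have int1: "integrable lborel (\<lambda>t. dirichlet_series \<phi> (Complex \<sigma> t) * mellin f (Complex \<sigma> t))"
    proof (rule Bochner_Integration.integrable_bound)
      show "integrable lborel (\<lambda>t. S * norm (mellin f (Complex \<sigma> t)))"
        using Mi by (intro Bochner_Integration.integrable_mult_right integrable_norm)
      show "(\<lambda>t. dirichlet_series \<phi> (Complex \<sigma> t) * mellin f (Complex \<sigma> t)) \<in> borel_measurable lborel"
        by measurable
      show "AE t in lborel. norm (dirichlet_series \<phi> (Complex \<sigma> t) * mellin f (Complex \<sigma> t))
            \<le> norm (S * norm (mellin f (Complex \<sigma> t)))"
      proof (rule AE_I2)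
        fix t
        have S0: "0 \<le> S" using PB[of t] norm_ge_zero order_trans by blast
        have "norm (dirichlet_series \<phi> (Complex \<sigma> t) * mellin f (Complex \<sigma> t))
            \<le> S * norm (mellin f (Complex \<sigma> t))"
          unfolding norm_mult by (intro mult_right_mono PB) auto
        then show "norm (dirichlet_series \<phi> (Complex \<sigma> t) * mellin f (Complex \<sigma> t))
            \<le> norm (S * norm (mellin f (Complex \<sigma> t)))" using S0 by simp
      qed
    qed
    moreover have "(\<lambda>n. \<phi> (Suc n) * f (real (Suc n) * x)) sums
               (1 / (2 * of_real pi * \<i>) *
                 (LINT t|lborel. dirichlet_series \<phi> (Complex \<sigma> t) * mellin f (Complex \<sigma> t)
                                  * of_real x powr (- Complex \<sigma> t) * \<i>))" if x: "x > 0" for x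
    proof -
      define g where "g n t = \<phi> (Suc n) / of_nat (Suc n) powr Complex \<sigma> t * mellin f (Complex \<sigma> t)
          * of_real x powr (- Complex \<sigma> t) * \<i>" for n t
      have Hm: "(\<lambda>t. complex_of_real y powr (- Complex \<sigma> t)) \<in> borel_measurable borel" if "y > 0" for y
        using cpowr_line_meas[OF that, of "-1" \<sigma>] by simp
      have pw: "complex_of_real (real (Suc n) * x) powr (- Complex \<sigma> t)
          = (1 / of_nat (Suc n) powr Complex \<sigma> t) * of_real x powr (- Complex \<sigma> t)" for n t
        using cpowr_mult_pos[of "real (Suc n)" x "- Complex \<sigma> t"] x by (simp add: powr_minus_divide)
      have geq: "g n t = (\<i> * \<phi> (Suc n)) * (mellin f (Complex \<sigma> t) * complex_of_real (real (Suc n) * x) powr (- Complex \<sigma> t))" for n t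
        unfolding g_def pw by (simp add: mult_ac)
      have mint: "integrable lborel (\<lambda>t. mellin f (Complex \<sigma> t) * complex_of_real y powr (- Complex \<sigma> t))"
        if y: "y > 0" for y
      proof (rule Bochner_Integration.integrable_bound)
        show "integrable lborel (\<lambda>t. y powr (- \<sigma>) * norm (mellin f (Complex \<sigma> t)))"
          using Mi by (intro Bochner_Integration.integrable_mult_right integrable_norm)
        have [measurable]: "(\<lambda>t. complex_of_real y powr (- Complex \<sigma> t)) \<in> borel_measurable borel"
          by (rule Hm[OF y])
        show "(\<lambda>t. mellin f (Complex \<sigma> t) * complex_of_real y powr (- Complex \<sigma> t)) \<in> borel_measurable lborel"
          by measurable
        show "AE t in lborel. norm (mellin f (Complex \<sigma> t) * complex_of_real y powr (- Complex \<sigma> t))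
            \<le> norm (y powr (- \<sigma>) * norm (mellin f (Complex \<sigma> t)))"
          using y by (intro AE_I2) (simp add: norm_mult norm_cpowr_pos)
      qed
      have gint: "integrable lborel (g n)" for n
        unfolding geq[abs_def]
        by (intro Bochner_Integration.integrable_mult_right mint) (use x in simp)
      have gI: "(\<integral>t. g n t \<partial>lborel) = (\<i> * \<phi> (Suc n)) * (2 * pi * f (real (Suc n) * x))" for n
      proof -
        have "(\<integral>t. g n t \<partial>lborel) = (\<i> * \<phi> (Suc n)) *
            (\<integral>t. mellin f (Complex \<sigma> t) * complex_of_real (real (Suc n) * x) powr (- Complex \<sigma> t) \<partial>lborel)"
          unfolding geq by (rule integral_mult_right_zero)
        also have "\<dots> = (\<i> * \<phi> (Suc n)) * (2 * pi * f (real (Suc n) * x))"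
          using M.mellin_inversion[OF s0, of "real (Suc n) * x"] x by simp
        finally show ?thesis .
      qed
      have gnorm: "norm (g n t) = norm (\<phi> (Suc n)) / real (Suc n) powr \<sigma> * (norm (mellin f (Complex \<sigma> t)) * x powr (- \<sigma>))" for n t
      proof -
        have "norm (g n t) = norm (\<phi> (Suc n) / of_nat (Suc n) powr Complex \<sigma> t) * norm (mellin f (Complex \<sigma> t))
            * norm (complex_of_real x powr (- Complex \<sigma> t)) * norm \<i>"
          unfolding g_def by (simp only: norm_mult)
        then show ?thesis using x by (simp only: norm_dterm norm_cpowr_pos) simp
      qed
      have sm: "summable (\<lambda>n. norm (\<phi> (Suc n)) / real (Suc n) powr \<sigma>)"
        using summ[of "complex_of_real \<sigma>"] \<sigma> by simp
      have "(\<lambda>n. \<integral>t. g n t \<partial>lborel) sums (\<integral>t. (\<Sum>n. g n t) \<partial>lborel)"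
      proof (rule sums_integral)
        show "integrable lborel (g n)" for n by (rule gint)
        show "AE t in lborel. summable (\<lambda>n. norm (g n t))"
          unfolding gnorm by (intro AE_I2 summable_mult2 sm)
        have "(\<integral>t. norm (g n t) \<partial>lborel) = norm (\<phi> (Suc n)) / real (Suc n) powr \<sigma> *
            (\<integral>t. norm (mellin f (Complex \<sigma> t)) * x powr (- \<sigma>) \<partial>lborel)" for n
          unfolding gnorm by (rule integral_mult_right_zero)
        then show "summable (\<lambda>n. \<integral>t. norm (g n t) \<partial>lborel)"
          by (simp only:) (intro summable_mult2 sm)
      qed
      moreover have "(\<Sum>n. g n t) = dirichlet_series \<phi> (Complex \<sigma> t) * mellin f (Complex \<sigma> t)
                                  * of_real x powr (- Complex \<sigma> t) * \<i>" for t
      proof -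
        have "(\<Sum>n. g n t) = (\<Sum>n. \<phi> (Suc n) / of_nat (Suc n) powr Complex \<sigma> t *
            (mellin f (Complex \<sigma> t) * of_real x powr (- Complex \<sigma> t) * \<i>))"
          unfolding g_def by (simp only: mult.assoc)
        also have "\<dots> = dirichlet_series \<phi> (Complex \<sigma> t) * (mellin f (Complex \<sigma> t) * of_real x powr (- Complex \<sigma> t) * \<i>)"
          unfolding dirichlet_series_def by (rule suminf_mult2[symmetric]) (use summ' \<sigma> in simp)
        finally show ?thesis by (simp only: mult.assoc)
      qed
      ultimately have "(\<lambda>n. (\<i> * \<phi> (Suc n)) * (2 * pi * f (real (Suc n) * x))) sums
          (LINT t|lborel. dirichlet_series \<phi> (Complex \<sigma> t) * mellin f (Complex \<sigma> t)
                                  * of_real x powr (- Complex \<sigma> t) * \<i>)"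
        unfolding gI by simp
      from sums_mult[OF this, of "1 / (2 * of_real pi * \<i>)"]
      show ?thesis by (simp add: field_simps)
    qed
    ultimately show ?thesis by blast
  qed
  have part2: "mellin_exists (\<lambda>x. \<Sum>n. \<phi> (Suc n) * f (real (Suc n) * x)) s \<and>
            mellin (\<lambda>x. \<Sum>n. \<phi> (Suc n) * f (real (Suc n) * x)) s
              = dirichlet_series \<phi> s * mellin f s"
    if s: "1 < Re s" "Re s < \<alpha>" for s
  proof -
    define \<sigma> where "\<sigma> = Re s"
    have s0: "0 < Re s" "Re s < \<alpha>" using s by auto
    obtain C X where CX: "\<forall>y\<ge>X. norm (D 0 y) \<le> C * y powr (- \<alpha> - real 0)"
      using Db assms(2) by auto
    define X' where "X' = max X 1"
    have X': "X' \<ge> X" "X' \<ge> 1" by (auto simp: X'_def)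
    have fb: "norm (f y) \<le> C * y powr (- \<alpha>)" if "y \<ge> X'" for y
    proof -
      have "y \<ge> 0" "y \<ge> X" using that X' by auto
      then show ?thesis using CX D0 by force
    qed
    have Gsum: "summable (\<lambda>n. norm (\<phi> (Suc n) * f (real (Suc n) * x)))" if x: "x > 0" for x
    proof (rule summable_comparison_test')
      show "summable (\<lambda>n. (\<bar>C\<bar> * x powr (- \<alpha>)) * (norm (\<phi> (Suc n)) / real (Suc n) powr \<alpha>))"
        using summ[of "complex_of_real \<alpha>"] assms(1) by (intro summable_mult) simp
      fix n assume n: "nat (ceiling (X' / x)) \<le> n"
      have "X' / x \<le> real n" using n by linarith
      then have "X' \<le> real (Suc n) * x" using x by (simp add: field_simps)
      then have "norm (f (real (Suc n) * x)) \<le> C * (real (Suc n) * x) powr (- \<alpha>)" by (rule fb)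
      also have "\<dots> \<le> \<bar>C\<bar> * (real (Suc n) * x) powr (- \<alpha>)" by (intro mult_right_mono) auto
      also have "\<dots> = \<bar>C\<bar> * x powr (- \<alpha>) / real (Suc n) powr \<alpha>"
        using x by (simp add: powr_mult powr_minus_divide)
      finally have "norm (\<phi> (Suc n)) * norm (f (real (Suc n) * x)) \<le> norm (\<phi> (Suc n)) * (\<bar>C\<bar> * x powr (- \<alpha>) / real (Suc n) powr \<alpha>)"
        by (intro mult_left_mono) auto
      then show "norm (norm (\<phi> (Suc n) * f (real (Suc n) * x))) \<le> (\<bar>C\<bar> * x powr (- \<alpha>)) * (norm (\<phi> (Suc n)) / real (Suc n) powr \<alpha>)"
        by (simp add: norm_mult mult_ac)
    qed
    define F where "F y = indicator {0<..} y *\<^sub>R (complex_of_real y powr (s - 1) * f y)" for y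
    have intF: "integrable lborel F"
      using M.mellin_FT(1)[OF s0] unfolding mellin_exists_def set_integrable_def F_def[abs_def] .
    have IF: "(\<integral>y. F y \<partial>lborel) = mellin f s"
      unfolding mellin_def set_lebesgue_integral_def F_def ..
    define g where "g n x = (\<phi> (Suc n) * complex_of_real (real (Suc n)) powr (1 - s)) * F (real (Suc n) * x)" for n x
    have affI: "(\<integral>x. H (real (Suc n) * x) \<partial>lborel) = inverse (real (Suc n)) *\<^sub>R (\<integral>y. H y \<partial>lborel)"
      for H :: "real \<Rightarrow> 'a::{banach, second_countable_topology}" and n
    proof -
      have "(\<integral>y. H y \<partial>lborel) = real (Suc n) *\<^sub>R (\<integral>x. H (real (Suc n) * x) \<partial>lborel)"
        using lborel_integral_real_affine[of "real (Suc n)" H 0] by simp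
      then show ?thesis by (simp del: of_nat_Suc)
    qed
    have gint: "integrable lborel (g n)" for n
    proof -
      have "integrable lborel (\<lambda>x. F (0 + real (Suc n) * x))"
        by (rule lborel_integrable_real_affine[OF intF]) simp
      then show ?thesis unfolding g_def[abs_def] by (intro Bochner_Integration.integrable_mult_right) simp
    qed
    have gI: "(\<integral>x. g n x \<partial>lborel) = \<phi> (Suc n) / of_nat (Suc n) powr s * mellin f s" for n
    proof -
      have "(\<integral>x. g n x \<partial>lborel) = (\<phi> (Suc n) * complex_of_real (real (Suc n)) powr (1 - s)) * (inverse (real (Suc n)) *\<^sub>R mellin f s)"
        unfolding g_def integral_mult_right_zero affI IF ..
      also have "complex_of_real (real (Suc n)) powr (1 - s) = complex_of_real (real (Suc n)) / complex_of_real (real (Suc n)) powr s"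
        by (simp add: powr_diff del: of_nat_Suc)
      finally show ?thesis by (simp add: field_simps scaleR_conv_of_real del: of_nat_Suc)
    qed
    have gx: "g n x = complex_of_real x powr (s - 1) * (\<phi> (Suc n) * f (real (Suc n) * x))" if x: "x > 0" for n x
    proof -
      have "complex_of_real (real (Suc n) * x) powr (s - 1) = complex_of_real (real (Suc n)) powr (s - 1) * complex_of_real x powr (s - 1)"
        using x by (intro cpowr_mult_pos) auto
      moreover have "complex_of_real (real (Suc n)) powr (1 - s) * complex_of_real (real (Suc n)) powr (s - 1) = 1"
        by (simp add: powr_add[symmetric] del: of_nat_Suc)
      ultimately show ?thesis using x
        unfolding g_def F_def by (simp add: mult_ac del: of_nat_Suc)
    qed
    have g0: "g n x = 0" if x: "x \<le> 0" for n x
    proof -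
      have "\<not> (0 < real (Suc n) * x)" using mult_nonneg_nonpos[of "real (Suc n)" x] x by linarith
      then show ?thesis unfolding g_def F_def by (simp add: indicator_def del: of_nat_Suc)
    qed
    have gsum: "(\<Sum>n. g n x) = indicator {0<..} x *\<^sub>R (complex_of_real x powr (s - 1) * (\<Sum>n. \<phi> (Suc n) * f (real (Suc n) * x)))" for x
    proof (cases "x > 0")
      case True
      then show ?thesis
        using suminf_mult[OF summable_norm_cancel[OF Gsum[OF True]], of "complex_of_real x powr (s - 1)"]
        by (simp add: gx)
    next
      case False
      then show ?thesis by (simp add: g0)
    qed
    have gsumm: "summable (\<lambda>n. norm (g n x))" for x
    proof (cases "x > 0")
      case True
      then show ?thesis
        using summable_mult[OF Gsum[OF True], of "norm (complex_of_real x powr (s - 1))"]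
        by (simp add: gx norm_mult)
    next
      case False
      then show ?thesis by (simp add: g0)
    qed
    have gnI: "(\<integral>x. norm (g n x) \<partial>lborel) = norm (\<phi> (Suc n)) / real (Suc n) powr \<sigma> * (\<integral>y. norm (F y) \<partial>lborel)" for n
    proof -
      have "(\<integral>x. norm (g n x) \<partial>lborel) = (norm (\<phi> (Suc n)) * real (Suc n) powr (1 - \<sigma>)) * (\<integral>x. norm (F (real (Suc n) * x)) \<partial>lborel)"
      proof -
        have nc: "norm ((of_nat (Suc n)::complex) powr (1 - s)) = real (Suc n) powr (1 - \<sigma>)"
          using norm_cpowr_pos[of "real (Suc n)" "1 - s"] by (simp add: \<sigma>_def)
        show ?thesis unfolding g_def norm_mult by (simp add: nc del: of_nat_Suc)
      qed
      also have "(\<integral>x. norm (F (real (Suc n) * x)) \<partial>lborel) = inverse (real (Suc n)) *\<^sub>R (\<integral>y. norm (F y) \<partial>lborel)"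
        by (rule affI)
      also have "real (Suc n) powr (1 - \<sigma>) = real (Suc n) / real (Suc n) powr \<sigma>"
        by (simp add: powr_diff del: of_nat_Suc)
      finally show ?thesis by (simp add: field_simps del: of_nat_Suc)
    qed
    have sm: "summable (\<lambda>n. norm (\<phi> (Suc n)) / real (Suc n) powr \<sigma>)"
      using summ[of s] s unfolding \<sigma>_def by simp
    have hyps: "\<And>n. integrable lborel (g n)" "AE x in lborel. summable (\<lambda>n. norm (g n x))"
      "summable (\<lambda>n. \<integral>x. norm (g n x) \<partial>lborel)"
      using gint gsumm by (auto simp only: gnI intro!: summable_mult2 sm AE_I2)
    have eqf: "(\<lambda>x. indicator {0<..} x *\<^sub>R (complex_of_real x powr (s - 1) * (\<Sum>n. \<phi> (Suc n) * f (real (Suc n) * x))))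
        = (\<lambda>x. \<Sum>n. g n x)"
      by (simp add: gsum)
    show ?thesis
    proof
      show "mellin_exists (\<lambda>x. \<Sum>n. \<phi> (Suc n) * f (real (Suc n) * x)) s"
        unfolding mellin_exists_def set_integrable_def eqf by (rule integrable_suminf[OF hyps])
      have "mellin (\<lambda>x. \<Sum>n. \<phi> (Suc n) * f (real (Suc n) * x)) s = (\<integral>x. (\<Sum>n. g n x) \<partial>lborel)"
        unfolding mellin_def set_lebesgue_integral_def eqf ..
      also have "\<dots> = (\<Sum>n. \<integral>x. g n x \<partial>lborel)" by (rule integral_suminf[OF hyps])
      also have "\<dots> = (\<Sum>n. \<phi> (Suc n) / of_nat (Suc n) powr s * mellin f s)" by (simp only: gI)
      also have "\<dots> = dirichlet_series \<phi> s * mellin f s"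
        unfolding dirichlet_series_def by (rule suminf_mult2[symmetric, OF summ'[OF s(1)]])
      finally show "mellin (\<lambda>x. \<Sum>n. \<phi> (Suc n) * f (real (Suc n) * x)) s = dirichlet_series \<phi> s * mellin f s" .
    qed
  qed
  show ?thesis using part1 part2 by blast
qed

end
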